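(* Let $\mathcal{G}$, $\mathcal{S}$, $\mathcal{C}$, $\mu$ be as in the context and let $\mathcal{K}$ be a cover of $\mathcal{C}$. For each dichotomy $(i,b,J,u_1,u_2)$ let $X^{i,u_1,u_2}_{b,J}:=\mu_i^{s}-\mu_i^{s'}$, where $(s,s')$ is an $(i,b,J,u_1,u_2)$-pair contained in $\mathcal{K}$. Then for any state $s\in\mathcal{S}$ and any $i\in[k]$ with $s(i)=b$, and any $s''\in\mathcal{K}$ with $s''(i)=b$, $$\mu_i^s=\mu_i^{s''}+\sum_{J\in I_i}X^{i,s(J),s''(J)}_{b,J}.$$
   Context: $\mathcal{G}=(V,E)$ is an undirected graph on $V=\{v_1,\dots,v_k\}$; $\mathcal{S}=\{s\in\{0,1\}^k:\{v_i:s(i)=1\}$ is independent in $\mathcal{G}\}$. Correlation sets $\mathcal{C}=\{C_1,\dots,C_n\}$ are subsets of $[k]$ of size at most $m$; for each $s\in\mathcal{S}$ and $j\in[n]$ there is $\theta_j^s\ge0$ depending only on $s$ restricted to $C_j$, and $\mu_i^s=\sum_j\theta_j^s\mathbf{1}(i\in C_j)$. Two vertices share a correlation set if they lie together in some set of $\mathcal{C}$. For each $i$, $I_i$ is a partition of the set of indices $j\neq i$ that share a correlation set with $i$ into disjoint subsets such that no two vertices in different subsets share a correlation set. For $J\subseteq[k]$, $s(J)\in\{0,1\}^J$ is $s$ restricted to $J$. For $J\in I_i$, $b\in\{0,1\}$, $u_1,u_2\in\{0,1\}^J$, $(i,b,J,u_1,u_2)$ is a dichotomy if there exist $s,s'\in\mathcal{S}$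 with $s(J)=u_1$, $s'(J)=u_2$, $s(i)=s'(i)=b$, and $s,s'$ agreeing on all coordinates outside $J\cup\{i\}$; such a pair is an $(i,b,J,u_1,u_2)$-pair. A set $\mathcal{K}\subseteq\mathcal{S}$ is a cover of $\mathcal{C}$ if for every dichotomy $(i,b,J,u_1,u_2)$ it contains an $(i,b,J,u_1,u_2)$-pair. *)

theory Defs
  imports Complex_Main "HOL-Library.FuncSet"
begin

definition simple_graph :: "nat \<Rightarrow> nat set set \<Rightarrow> bool" where
  "simple_graph k E \<longleftrightarrow> (\<forall>e\<in>E. \<exists>a b. e = {a, b} \<and> a \<noteq> b \<and> a \<in> {1..k} \<and> b \<in> {1..k})"

definition states :: "nat \<Rightarrow> nat set set \<Rightarrow> (nat \<Rightarrow> nat) set" where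
  "states k E = {s. s \<in> {1..k} \<rightarrow>\<^sub>E {0, 1} \<and>
      (\<forall>a b. {a, b} \<in> E \<longrightarrow> \<not> (s a = 1 \<and> s b = 1))}"

abbreviation restr :: "(nat \<Rightarrow> nat) \<Rightarrow> nat set \<Rightarrow> (nat \<Rightarrow> nat)" where
  "restr s J \<equiv> restrict s J"

definition mu :: "nat \<Rightarrow> (nat \<Rightarrow> nat set) \<Rightarrow> ((nat \<Rightarrow> nat) \<Rightarrow> nat \<Rightarrow> real)
                   \<Rightarrow> nat \<Rightarrow> (nat \<Rightarrow> nat) \<Rightarrow> real" where
  "mu n C \<theta> i s = (\<Sum>j\<in>{1..n}. \<theta> s j * (if i \<in> C j then 1 else 0))"

definition share :: "nat \<Rightarrow> (nat \<Rightarrow> nat set) \<Rightarrow> nat \<Rightarrow> nat \<Rightarrow> bool" where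
  "share n C a b \<longleftrightarrow> (\<exists>l\<in>{1..n}. a \<in> C l \<and> b \<in> C l)"

definition nbrs :: "nat \<Rightarrow> nat \<Rightarrow> (nat \<Rightarrow> nat set) \<Rightarrow> nat \<Rightarrow> nat set" where
  "nbrs k n C i = {j \<in> {1..k}. j \<noteq> i \<and> share n C i j}"

definition valid_I :: "nat \<Rightarrow> nat \<Rightarrow> (nat \<Rightarrow> nat set) \<Rightarrow> nat \<Rightarrow> nat set set \<Rightarrow> bool" where
  "valid_I k n C i P \<longleftrightarrow>
     \<Union>P = nbrs k n C i \<and> (\<forall>J\<in>P. J \<noteq> {}) \<and>
     (\<forall>J\<in>P. \<forall>J'\<in>P. J \<noteq> J' \<longrightarrow> J \<inter> J' = {}) \<and>
     (\<forall>J\<in>P. \<forall>J'\<in>P. J \<noteq> J' \<longrightarrow> (\<forall>a\<in>J. \<forall>a'\<in>J'. \<not> share n C a a'))"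

definition is_pair :: "nat \<Rightarrow> nat set set \<Rightarrow> nat \<Rightarrow> nat \<Rightarrow> nat set \<Rightarrow> (nat \<Rightarrow> nat)
     \<Rightarrow> (nat \<Rightarrow> nat) \<Rightarrow> (nat \<Rightarrow> nat) \<Rightarrow> (nat \<Rightarrow> nat) \<Rightarrow> bool" where
  "is_pair k E i b J u1 u2 s s' \<longleftrightarrow>
     s \<in> states k E \<and> s' \<in> states k E \<and> restr s J = u1 \<and> restr s' J = u2 \<and>
     s i = b \<and> s' i = b \<and> (\<forall>x\<in>{1..k} - (J \<union> {i}). s x = s' x)"

definition dichotomy :: "nat \<Rightarrow> nat set set \<Rightarrow> (nat \<Rightarrow> nat set set) \<Rightarrow> nat \<Rightarrow> nat \<Rightarrow> nat set
     \<Rightarrow> (nat \<Rightarrow> nat) \<Rightarrow> (nat \<Rightarrow> nat) \<Rightarrow> bool" where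
  "dichotomy k E I i b J u1 u2 \<longleftrightarrow>
     i \<in> {1..k} \<and> J \<in> I i \<and> b \<in> {0, 1} \<and> u1 \<in> J \<rightarrow>\<^sub>E {0, 1} \<and> u2 \<in> J \<rightarrow>\<^sub>E {0, 1} \<and>
     (\<exists>s s'. is_pair k E i b J u1 u2 s s')"

definition is_cover :: "nat \<Rightarrow> nat set set \<Rightarrow> (nat \<Rightarrow> nat set set) \<Rightarrow> (nat \<Rightarrow> nat) set \<Rightarrow> bool" where
  "is_cover k E I K \<longleftrightarrow> K \<subseteq> states k E \<and>
     (\<forall>i b J u1 u2. dichotomy k E I i b J u1 u2 \<longrightarrow>
        (\<exists>s\<in>K. \<exists>s'\<in>K. is_pair k E i b J u1 u2 s s'))"

end

theory Submission
  imports Defs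
begin

theorem theorem7:
  fixes k n m :: nat and E :: "nat set set" and C :: "nat \<Rightarrow> nat set"
    and \<theta> :: "(nat \<Rightarrow> nat) \<Rightarrow> nat \<Rightarrow> real" and I :: "nat \<Rightarrow> nat set set"
    and K :: "(nat \<Rightarrow> nat) set"
    and pick :: "nat \<Rightarrow> nat \<Rightarrow> nat set \<Rightarrow> (nat \<Rightarrow> nat) \<Rightarrow> (nat \<Rightarrow> nat)
                 \<Rightarrow> (nat \<Rightarrow> nat) \<times> (nat \<Rightarrow> nat)"
    and s s'' :: "nat \<Rightarrow> nat" and i b :: nat
  assumes graph: "simple_graph k E"
    and C_sub: "\<forall>j\<in>{1..n}. C j \<subseteq> {1..k}"
    and C_card: "\<forall>j\<in>{1..n}. card (C j) \<le> m"
    and theta_nonneg: "\<forall>t\<in>states k E. \<forall>j\<in>{1..n}. \<theta> t j \<ge> 0"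
    and theta_local: "\<forall>t\<in>states k E. \<forall>t'\<in>states k E. \<forall>j\<in>{1..n}.
                         restr t (C j) = restr t' (C j) \<longrightarrow> \<theta> t j = \<theta> t' j"
    and I_valid: "\<forall>i'\<in>{1..k}. valid_I k n C i' (I i')"
    and cover: "is_cover k E I K"
    and pick: "\<forall>i' b' J u1 u2. dichotomy k E I i' b' J u1 u2 \<longrightarrow>
                  fst (pick i' b' J u1 u2) \<in> K \<and> snd (pick i' b' J u1 u2) \<in> K \<and>
                  is_pair k E i' b' J u1 u2 (fst (pick i' b' J u1 u2)) (snd (pick i' b' J u1 u2))"
    and s_state: "s \<in> states k E"
    and i_range: "i \<in> {1..k}"
    and s_i: "s i = b"
    and s''_K: "s'' \<in> K"
    and s''_i: "s'' i = b"
  shows "mu n C \<theta> i s =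
           mu n C \<theta> i s'' +
           (\<Sum>J\<in>I i. mu n C \<theta> i (fst (pick i b J (restr s J) (restr s'' J)))
                     - mu n C \<theta> i (snd (pick i b J (restr s J) (restr s'' J))))"
proof -
  have Ks: "K \<subseteq> states k E" using cover by (simp add: is_cover_def)
  have s''_state: "s'' \<in> states k E" using Ks s''_K by blast
  have vI: "valid_I k n C i (I i)" using I_valid i_range by blast
  have U: "\<Union>(I i) = nbrs k n C i" using vI unfolding valid_I_def by (elim conjE)
  have NS: "\<And>J J' a a'. J \<in> I i \<Longrightarrow> J' \<in> I i \<Longrightarrow> J \<noteq> J' \<Longrightarrow> a \<in> J \<Longrightarrow> a' \<in> J' \<Longrightarrow> \<not> share n C a a'"
    using vI unfolding valid_I_def by (elim conjE) metis
  have blocks_sub: "\<And>J. J \<in> I i \<Longrightarrow> J \<subseteq> nbrs k n C i" using U by blast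
  have fin: "finite (I i)"
  proof -
    have "I i \<subseteq> Pow (nbrs k n C i)" using blocks_sub by blast
    moreover have "finite (nbrs k n C i)" unfolding nbrs_def by simp
    ultimately show ?thesis by (meson finite_Pow_iff finite_subset)
  qed
  have iJ: "\<And>J. J \<in> I i \<Longrightarrow> i \<notin> J" using blocks_sub unfolding nbrs_def by blast
  have Jk: "\<And>J. J \<in> I i \<Longrightarrow> J \<subseteq> {1..k}" using blocks_sub unfolding nbrs_def by blast
  have cover_ex: "\<And>j a. j \<in> {1..n} \<Longrightarrow> i \<in> C j \<Longrightarrow> a \<in> C j \<Longrightarrow> a \<noteq> i \<Longrightarrow> \<exists>J\<in>I i. a \<in> J"
  proof -
    fix j a assume "j \<in> {1..n}" "i \<in> C j" "a \<in> C j" "a \<noteq> i"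
    then have "a \<in> nbrs k n C i" using C_sub unfolding nbrs_def share_def by blast
    then show "\<exists>J\<in>I i. a \<in> J" using U by blast
  qed
  have uniq: "\<And>j a a' J J'. j \<in> {1..n} \<Longrightarrow> a \<in> C j \<Longrightarrow> a' \<in> C j \<Longrightarrow> J \<in> I i \<Longrightarrow> J' \<in> I i
      \<Longrightarrow> a \<in> J \<Longrightarrow> a' \<in> J' \<Longrightarrow> J = J'"
  proof -
    fix j a a' J J' assume h: "j \<in> {1..n}" "a \<in> C j" "a' \<in> C j" "J \<in> I i" "J' \<in> I i"
      "a \<in> J" "a' \<in> J'"
    then have "share n C a a'" unfolding share_def by blast
    then show "J = J'" using NS h by blast
  qed
  have inside: "\<And>j J. j \<in> {1..n} \<Longrightarrow> i \<in> C j \<Longrightarrow> J \<in> I i \<Longrightarrow> C j \<inter> J \<noteq> {} \<Longrightarrow> C j \<subseteq> J \<union> {i}"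
  proof
    fix j J x assume h: "j \<in> {1..n}" "i \<in> C j" "J \<in> I i" "C j \<inter> J \<noteq> {}" "x \<in> C j"
    show "x \<in> J \<union> {i}"
    proof (cases "x = i")
      case False
      then obtain J' where "J' \<in> I i" "x \<in> J'" using cover_ex h by blast
      moreover obtain a where "a \<in> C j \<inter> J" using h by blast
      ultimately have "J = J'" using uniq[of j a x J J'] h by blast
      then show ?thesis using \<open>x \<in> J'\<close> by blast
    qed simp
  qed
  define c where "c j = \<theta> s j - \<theta> s'' j" for j
  define D where "D J = (\<Sum>j\<in>{1..n}. if i \<in> C j \<and> C j \<inter> J \<noteq> {} then c j else 0)" for J
  have sPi: "s \<in> {1..k} \<rightarrow>\<^sub>E {0,1}" and s''Pi: "s'' \<in> {1..k} \<rightarrow>\<^sub>E {0,1}"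
    using s_state s''_state unfolding states_def by auto
  have step1: "mu n C \<theta> i (fst (pick i b J (restr s J) (restr s'' J)))
             - mu n C \<theta> i (snd (pick i b J (restr s J) (restr s'' J))) = D J" if JI: "J \<in> I i" for J
  proof -
    define t0 where "t0 x = (if x \<in> {1..k} - (J \<union> {i}) then 0 else s x)" for x
    define t1 where "t1 x = (if x \<in> {1..k} - (J \<union> {i}) then 0 else s'' x)" for x
    have t0s: "t0 \<in> states k E"
    proof -
      have A: "s \<in> {1..k} \<rightarrow>\<^sub>E {0,1}" and B: "\<forall>a b. {a, b} \<in> E \<longrightarrow> \<not> (s a = 1 \<and> s b = 1)"
        using s_state unfolding states_def by auto
      have "t0 \<in> {1..k} \<rightarrow>\<^sub>E {0,1}"
      proof (rule PiE_I)
        fix x assume "x \<in> {1..k}" then show "t0 x \<in> {0,1}" using A by (auto simp: t0_def)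
      next
        fix x assume "x \<notin> {1..k}" then show "t0 x = undefined" using A by (auto simp: t0_def)
      qed
      moreover have "\<And>x. t0 x = 1 \<Longrightarrow> s x = 1" by (simp add: t0_def split: if_splits)
      ultimately show ?thesis using B unfolding states_def by blast
    qed
    have t1s: "t1 \<in> states k E"
    proof -
      have A: "s'' \<in> {1..k} \<rightarrow>\<^sub>E {0,1}" and B: "\<forall>a b. {a, b} \<in> E \<longrightarrow> \<not> (s'' a = 1 \<and> s'' b = 1)"
        using s''_state unfolding states_def by auto
      have "t1 \<in> {1..k} \<rightarrow>\<^sub>E {0,1}"
      proof (rule PiE_I)
        fix x assume "x \<in> {1..k}" then show "t1 x \<in> {0,1}" using A by (auto simp: t1_def)
      next
        fix x assume "x \<notin> {1..k}" then show "t1 x = undefined" using A by (auto simp: t1_def)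
      qed
      moreover have "\<And>x. t1 x = 1 \<Longrightarrow> s'' x = 1" by (simp add: t1_def split: if_splits)
      ultimately show ?thesis using B unfolding states_def by blast
    qed
    have "is_pair k E i b J (restr s J) (restr s'' J) t0 t1"
    proof -
      have "restr t0 J = restr s J" by (rule restrict_ext) (simp add: t0_def)
      moreover have "restr t1 J = restr s'' J" by (rule restrict_ext) (simp add: t1_def)
      moreover have "t0 i = b" "t1 i = b" using s_i s''_i by (simp_all add: t0_def t1_def)
      moreover have "\<forall>x\<in>{1..k} - (J \<union> {i}). t0 x = t1 x" by (simp add: t0_def t1_def)
      ultimately show ?thesis unfolding is_pair_def using t0s t1s by blast
    qed
    moreover have "b \<in> {0,1}" using sPi s_i i_range by auto
    moreover have "restr s J \<in> J \<rightarrow>\<^sub>E {0,1}"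
      unfolding restrict_PiE_iff using PiE_mem[OF sPi] Jk[OF JI] by blast
    moreover have "restr s'' J \<in> J \<rightarrow>\<^sub>E {0,1}"
      unfolding restrict_PiE_iff using PiE_mem[OF s''Pi] Jk[OF JI] by blast
    ultimately have dich: "dichotomy k E I i b J (restr s J) (restr s'' J)"
      unfolding dichotomy_def using i_range JI by blast
    define t where "t = fst (pick i b J (restr s J) (restr s'' J))"
    define t' where "t' = snd (pick i b J (restr s J) (restr s'' J))"
    have P: "is_pair k E i b J (restr s J) (restr s'' J) t t'"
      using pick dich unfolding t_def t'_def by blast
    have ts: "t \<in> states k E" "t' \<in> states k E" using P unfolding is_pair_def by auto
    have tJ: "\<And>x. x \<in> J \<Longrightarrow> t x = s x" using P unfolding is_pair_def
      by (metis restrict_apply')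
    have t'J: "\<And>x. x \<in> J \<Longrightarrow> t' x = s'' x" using P unfolding is_pair_def
      by (metis restrict_apply')
    have ti: "t i = s i" "t' i = s'' i" using P s_i s''_i unfolding is_pair_def by auto
    have agree: "\<And>x. x \<in> {1..k} - (J \<union> {i}) \<Longrightarrow> t x = t' x" using P unfolding is_pair_def by auto
    have "mu n C \<theta> i t - mu n C \<theta> i t' =
        (\<Sum>j\<in>{1..n}. \<theta> t j * (if i \<in> C j then 1 else 0) - \<theta> t' j * (if i \<in> C j then 1 else 0))"
      unfolding mu_def by (simp add: sum_subtractf)
    also have "\<dots> = D J" unfolding D_def
    proof (rule sum.cong[OF refl])
      fix j assume j: "j \<in> {1..n}"
      show "\<theta> t j * (if i \<in> C j then 1 else 0) - \<theta> t' j * (if i \<in> C j then 1 else 0) =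
            (if i \<in> C j \<and> C j \<inter> J \<noteq> {} then c j else 0)"
      proof (cases "i \<in> C j")
        case True
        show ?thesis
        proof (cases "C j \<inter> J = {}")
          case True
          have "restr t (C j) = restr t' (C j)"
          proof (rule restrict_ext)
            fix x assume x: "x \<in> C j"
            show "t x = t' x"
            proof (cases "x = i")
              case True then show ?thesis using ti s_i s''_i by simp
            next
              case False then show ?thesis using agree x C_sub j \<open>C j \<inter> J = {}\<close> by blast
            qed
          qed
          then have "\<theta> t j = \<theta> t' j" using theta_local ts j by blast
          then show ?thesis using True \<open>i \<in> C j\<close> by simp
        next
          case False
          have sub: "C j \<subseteq> J \<union> {i}" using inside j \<open>i \<in> C j\<close> JI False by blast
          have "restr t (C j) = restr s (C j)"
            by (rule restrict_ext) (use sub tJ ti in auto)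
          then have e1: "\<theta> t j = \<theta> s j" using theta_local ts s_state j by blast
          have "restr t' (C j) = restr s'' (C j)"
            by (rule restrict_ext) (use sub t'J ti in auto)
          then have e2: "\<theta> t' j = \<theta> s'' j" using theta_local ts s''_state j by blast
          show ?thesis using e1 e2 False \<open>i \<in> C j\<close> by (simp add: c_def)
        qed
      qed simp
    qed
    finally show ?thesis unfolding t_def t'_def .
  qed
  have step2: "mu n C \<theta> i s - mu n C \<theta> i s'' = (\<Sum>J\<in>I i. D J)"
  proof -
    have "mu n C \<theta> i s - mu n C \<theta> i s'' = (\<Sum>j\<in>{1..n}. \<theta> s j * (if i \<in> C j then 1 else 0) - \<theta> s'' j * (if i \<in> C j then 1 else 0))"
      unfolding mu_def by (rule sum_subtractf[symmetric])
    also have "\<dots> = (\<Sum>j\<in>{1..n}. if i \<in> C j then c j else 0)"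
      unfolding c_def by (rule sum.cong) simp_all
    also have "\<dots> = (\<Sum>j\<in>{1..n}. \<Sum>J\<in>I i. if i \<in> C j \<and> C j \<inter> J \<noteq> {} then c j else 0)"
    proof (rule sum.cong[OF refl])
      fix j assume j: "j \<in> {1..n}"
      show "(if i \<in> C j then c j else 0) = (\<Sum>J\<in>I i. if i \<in> C j \<and> C j \<inter> J \<noteq> {} then c j else 0)"
      proof (cases "i \<in> C j")
        case True
        show ?thesis
        proof (cases "C j \<subseteq> {i}")
          case True
          then have "C j = {i}" using \<open>i \<in> C j\<close> by blast
          then have "restr s (C j) = restr s'' (C j)" using s_i s''_i by (auto intro: restrict_ext)
          then have "\<theta> s j = \<theta> s'' j" using theta_local s_state s''_state j by blast
          then have c0: "c j = 0" unfolding c_def by simp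
          have "(\<Sum>J\<in>I i. if i \<in> C j \<and> C j \<inter> J \<noteq> {} then c j else 0) = 0"
            by (rule sum.neutral) (simp add: c0)
          then show ?thesis by (simp add: c0)
        next
          case False
          then obtain a where a: "a \<in> C j" "a \<noteq> i" by blast
          then obtain J0 where J0: "J0 \<in> I i" "a \<in> J0" using cover_ex j \<open>i \<in> C j\<close> by blast
          have iffJ: "\<And>J. J \<in> I i \<Longrightarrow> (C j \<inter> J \<noteq> {}) = (J = J0)"
          proof -
            fix J assume J: "J \<in> I i"
            show "(C j \<inter> J \<noteq> {}) = (J = J0)"
            proof
              assume "C j \<inter> J \<noteq> {}"
              then obtain a' where "a' \<in> C j" "a' \<in> J" by blast
              then show "J = J0" using uniq[of j a' a J J0] j a J0 J by blast
            next
              assume "J = J0" then show "C j \<inter> J \<noteq> {}" using a J0 by blast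
            qed
          qed
          have "(\<Sum>J\<in>I i. if i \<in> C j \<and> C j \<inter> J \<noteq> {} then c j else 0)
                     = (\<Sum>J\<in>I i. if J = J0 then c j else 0)"
          proof (rule sum.cong[OF refl])
            fix J assume "J \<in> I i"
            then have "(C j \<inter> J \<noteq> {}) = (J = J0)" by (rule iffJ)
            then show "(if i \<in> C j \<and> C j \<inter> J \<noteq> {} then c j else 0) = (if J = J0 then c j else 0)"
              using \<open>i \<in> C j\<close> by presburger
          qed
          also have "\<dots> = c j" using J0(1) fin by (simp only: sum.delta) simp
          finally show ?thesis using \<open>i \<in> C j\<close> by simp
        qed
      qed simp
    qed
    also have "\<dots> = (\<Sum>J\<in>I i. D J)" unfolding D_def by (rule sum.swap)
    finally show ?thesis .
  qed
  have "(\<Sum>J\<in>I i. mu n C \<theta> i (fst (pick i b J (restr s J) (restr s'' J)))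
                     - mu n C \<theta> i (snd (pick i b J (restr s J) (restr s'' J)))) = (\<Sum>J\<in>I i. D J)"
    by (rule sum.cong[OF refl step1])
  then show ?thesis using step2 by linarith
qed

end
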